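(* Consider group testing with $p$ items, $k=\Theta(p^\theta)$ defectives ($\theta\in(0,1)$), and i.i.d. Bernoulli testing with parameter $\nu>0$ (with reverse $Z$-channel noise). For a defective item $i\in S$ let $M_i$ be the number of tests containing $i$ and no other defective item. Fix $\gamma>0$ and $\Phi\in[0,1)$, and let $c=\Phi\nu e^{-\nu}\gamma\log p$ and $n=\gamma k\log p$. If $\theta>D_1(\Phi)\nu e^{-\nu}\gamma$, then with probability tending to one as $p\to\infty$ there exists a defective item $i\in S$ with $M_i\le c$.
   Context: Setup: unknown defective set $S$ uniform among size-$k$ subsets of $\{1,\dots,p\}$, $p\to\infty$. Test matrix $\mathbf X\in\{0,1\}^{n\times p}$ with i.i.d. Bernoulli$(\nu/k)$ entries ($X_{ij}=1$ iff item $j$ is in test $i$). Outcomes are obtained by passing $\bigvee_{j\in S}X_{ij}$ through the reverse $Z$-channel with parameter $\rho\in(0,1)$ (this does not affect $M_i$). Natural logarithms. $D_\gamma(t)=t\log(t/\gamma)-t+\gamma$ for $\gamma>0$, $t\ge0$. *)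

theory Defs
  imports "HOL-Probability.Probability" "HOL-Library.Landau_Symbols"
begin

text \<open>Relative-entropy type function D_g(t) = t log(t/g) - t + g (note ln 0 = 0, so D_g(0) = g).\<close>
definition Dfun :: "real \<Rightarrow> real \<Rightarrow> real" where
  "Dfun g t = t * ln (t / g) - t + g"

text \<open>Items are 0..p-1, tests 0..n-1. X (t,j) = True iff item j is in test t.\<close>
definition test_matrix_pmf :: "nat \<Rightarrow> nat \<Rightarrow> real \<Rightarrow> (nat \<times> nat \<Rightarrow> bool) pmf" where
  "test_matrix_pmf n p q = Pi_pmf ({..<n} \<times> {..<p}) False (\<lambda>_. bernoulli_pmf q)"

definition defective_set_pmf :: "nat \<Rightarrow> nat \<Rightarrow> nat set pmf" where
  "defective_set_pmf p k = pmf_of_set {S. S \<subseteq> {..<p} \<and> card S = k}"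

definition Mcount :: "nat \<Rightarrow> (nat \<times> nat \<Rightarrow> bool) \<Rightarrow> nat set \<Rightarrow> nat \<Rightarrow> nat" where
  "Mcount n X S i = card {t \<in> {..<n}. X (t, i) \<and> (\<forall>j \<in> S - {i}. \<not> X (t, j))}"

end

theory Submission
  imports Defs "HOL-Real_Asymp.Real_Asymp"
begin
lemma measure_pair_pmf_integral:
  "measure_pmf.prob (pair_pmf M N) E = measure_pmf.expectation M (\<lambda>x. measure_pmf.prob N {y. (x,y) \<in> E})"
proof -
  have "ennreal (measure_pmf.prob (pair_pmf M N) E) = emeasure (pair_pmf M N) E"
    by (simp add: measure_pmf.emeasure_eq_measure)
  also have "\<dots> = (\<integral>\<^sup>+z. indicator E z \<partial>pair_pmf M N)"
    by simp
  also have "\<dots> = (\<integral>\<^sup>+a. \<integral>\<^sup>+b. indicator E (a,b) \<partial>N \<partial>M)"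
    by (rule nn_integral_pair_pmf')
  also have "\<dots> = (\<integral>\<^sup>+a. ennreal (measure_pmf.prob N {y. (a,y) \<in> E}) \<partial>M)"
  proof (intro nn_integral_cong)
    fix a
    have "(\<integral>\<^sup>+b. indicator E (a,b) \<partial>N) = (\<integral>\<^sup>+b. indicator {y. (a,y) \<in> E} b \<partial>N)"
      by (intro nn_integral_cong) (auto simp: indicator_def)
    also have "\<dots> = emeasure N {y. (a,y) \<in> E}" by simp
    finally show "(\<integral>\<^sup>+b. indicator E (a,b) \<partial>N) = ennreal (measure_pmf.prob N {y. (a,y) \<in> E})"
      by (simp add: measure_pmf.emeasure_eq_measure)
  qed
  also have "\<dots> = ennreal (measure_pmf.expectation M (\<lambda>x. measure_pmf.prob N {y. (x,y) \<in> E}))"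
    by (intro nn_integral_eq_integral measure_pmf.integrable_const_bound[where B=1]) auto
  finally show ?thesis by (simp add: ennreal_inj)
qed

definition cnt :: "nat \<Rightarrow> 'a set \<Rightarrow> (nat \<Rightarrow> 'a) \<Rightarrow> nat" where
  "cnt n B f = card {t\<in>{..<n}. f t \<in> B}"

definition Tp :: "'a pmf \<Rightarrow> 'a \<Rightarrow> ('i \<Rightarrow> 'a set) \<Rightarrow> nat \<Rightarrow> 'i set \<Rightarrow> ('i \<Rightarrow> real) \<Rightarrow> real" where
  "Tp \<rho> d A n K e = measure_pmf.prob (Pi_pmf {..<n} d (\<lambda>_. \<rho>)) {f. \<forall>j\<in>K. real (cnt n (A j) f) > e j}"

lemma cnt_upd: "cnt (Suc n) B (f(n:=y)) = cnt n B f + (if y \<in> B then 1 else 0)"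
proof -
  have "{t\<in>{..<Suc n}. (f(n:=y)) t \<in> B} = {t\<in>{..<n}. f t \<in> B} \<union> (if y \<in> B then {n} else {})"
    by (auto simp: less_Suc_eq)
  moreover have "{t\<in>{..<n}. f t \<in> B} \<inter> (if y \<in> B then {n} else {}) = {}" by auto
  ultimately show ?thesis unfolding cnt_def by (simp add: card_Un_disjoint)
qed

lemma cnt_0[simp]: "cnt 0 B f = 0" by (simp add: cnt_def)

lemma Tp_0: "Tp \<rho> d A 0 K e = (if \<forall>j\<in>K. 0 > e j then 1 else 0)"
  by (simp add: Tp_def)

lemma Tp_Suc:
  "Tp \<rho> d A (Suc n) K e = measure_pmf.expectation \<rho> (\<lambda>y. Tp \<rho> d A n K (\<lambda>j. e j - indicator (A j) y))"
proof -
  have "{..<Suc n} = insert n {..<n}" by auto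
  hence "Pi_pmf {..<Suc n} d (\<lambda>_. \<rho>) = map_pmf (\<lambda>(y,f). f(n:=y)) (pair_pmf \<rho> (Pi_pmf {..<n} d (\<lambda>_. \<rho>)))"
    by (simp add: Pi_pmf_insert)
  hence "Tp \<rho> d A (Suc n) K e = measure_pmf.prob (pair_pmf \<rho> (Pi_pmf {..<n} d (\<lambda>_. \<rho>)))
      ((\<lambda>(y,f). f(n:=y)) -` {f. \<forall>j\<in>K. real (cnt (Suc n) (A j) f) > e j})"
    by (simp add: Tp_def)
  also have "\<dots> = measure_pmf.expectation \<rho> (\<lambda>y. Tp \<rho> d A n K (\<lambda>j. e j - indicator (A j) y))"
    unfolding measure_pair_pmf_integral Tp_def
    by (intro Bochner_Integration.integral_cong refl arg_cong[where f="measure_pmf.prob _"])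
       (auto simp: cnt_upd indicator_def)
  finally show ?thesis .
qed

lemma Tp_nonneg: "0 \<le> Tp \<rho> d A n K e" by (simp add: Tp_def)
lemma Tp_le1: "Tp \<rho> d A n K e \<le> 1" by (simp add: Tp_def)

lemma Tp_mono:
  assumes "\<And>j. j \<in> K \<Longrightarrow> e' j \<le> e j"
  shows "Tp \<rho> d A n K e \<le> Tp \<rho> d A n K e'"
  unfolding Tp_def
  by (intro measure_pmf.finite_measure_mono) (auto dest!: bspec intro: le_less_trans[OF assms])

lemma Tp_single_cong:
  "Tp \<rho> d A n {i} e = Tp \<rho> d A n {i} e'" if "e i = e' i"
  using that by (simp add: Tp_def)

lemma Tp_insert_le:
  assumes "i \<notin> J" "\<And>j. j \<in> J \<Longrightarrow> A i \<inter> A j = {}"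
  shows "Tp \<rho> d A n (insert i J) e \<le> Tp \<rho> d A n {i} e * Tp \<rho> d A n J e"
proof (induction n arbitrary: e)
  case 0
  then show ?case by (auto simp: Tp_0)
next
  case (Suc n)
  define u where "u = (\<lambda>y. Tp \<rho> d A n {i} (\<lambda>j. e j - indicator (A j) y))"
  define v where "v = (\<lambda>y. Tp \<rho> d A n J (\<lambda>j. e j - indicator (A j) y))"
  define U0 where "U0 = Tp \<rho> d A n {i} e"
  define U1 where "U1 = Tp \<rho> d A n {i} (\<lambda>j. e j - 1)"
  define V0 where "V0 = Tp \<rho> d A n J e"
  define \<alpha> where "\<alpha> = measure_pmf.prob \<rho> (A i)"
  have int: "integrable (measure_pmf \<rho>) (\<lambda>y. Tp \<rho> d A n K (\<lambda>j. e j - indicator (A j) y))" for K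
    by (intro measure_pmf.integrable_const_bound[where B=1]) (auto simp: Tp_nonneg Tp_le1)
  have intv: "integrable (measure_pmf \<rho>) v" unfolding v_def by (rule int)
  have u_eq: "u y = U0 + (U1 - U0) * indicator (A i) y" for y
    unfolding u_def U0_def U1_def
    by (cases "y \<in> A i") (auto intro: Tp_single_cong)
  have v_ge: "V0 \<le> v y" for y
    unfolding v_def V0_def by (intro Tp_mono) (auto simp: indicator_def)
  have v_Ai: "indicator (A i) y * v y = indicator (A i) y * V0" for y
  proof (cases "y \<in> A i")
    case True
    have "v y = V0" unfolding v_def V0_def Tp_def
      using True assms by (intro arg_cong[where f="measure_pmf.prob _"]) (auto simp: indicator_def)
    then show ?thesis by simp
  qed simp
  have U10: "U0 \<le> U1" unfolding U0_def U1_def by (intro Tp_mono) auto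
  have "Tp \<rho> d A (Suc n) (insert i J) e \<le> measure_pmf.expectation \<rho> (\<lambda>y. u y * v y)"
    unfolding Tp_Suc u_def v_def
    by (intro integral_mono int Suc.IH measure_pmf.integrable_const_bound[where B=1])
       (auto simp: Tp_nonneg Tp_le1 mult_le_one)
  also have "(\<lambda>y. u y * v y) = (\<lambda>y. U0 * v y + (U1 - U0) * (indicator (A i) y * V0))"
  proof (rule ext)
    fix y show "u y * v y = U0 * v y + (U1 - U0) * (indicator (A i) y * V0)"
      using v_Ai[of y] unfolding u_eq by (cases "y \<in> A i") (auto simp: algebra_simps)
  qed
  also have "measure_pmf.expectation \<rho> \<dots> = U0 * measure_pmf.expectation \<rho> v + (U1 - U0) * (\<alpha> * V0)"
  proof -
    have ii: "integrable (measure_pmf \<rho>) (\<lambda>y. indicator (A i) y :: real)"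
      by (intro measure_pmf.integrable_const_bound[where B=1]) (auto simp: indicator_def)
    have "measure_pmf.expectation \<rho> (\<lambda>y. U0 * v y + (U1 - U0) * (indicator (A i) y * V0))
       = measure_pmf.expectation \<rho> (\<lambda>y. U0 * v y) + measure_pmf.expectation \<rho> (\<lambda>y. (U1 - U0) * (indicator (A i) y * V0))"
      using intv ii by (intro Bochner_Integration.integral_add) auto
    also have "measure_pmf.expectation \<rho> (\<lambda>y. (U1 - U0) * (indicator (A i) y * V0)) = (U1 - U0) * (\<alpha> * V0)"
      by (simp add: \<alpha>_def)
    finally show ?thesis by simp
  qed
  also have "\<dots> \<le> (U0 + (U1 - U0) * \<alpha>) * measure_pmf.expectation \<rho> v"
  proof -
    have "V0 \<le> measure_pmf.expectation \<rho> v"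
      using measure_pmf.integral_ge_const[of "\<rho>" v V0] intv v_ge by auto
    moreover have "0 \<le> (U1 - U0) * \<alpha>" using U10 by (simp add: \<alpha>_def)
    ultimately have "(U1 - U0) * \<alpha> * V0 \<le> (U1 - U0) * \<alpha> * measure_pmf.expectation \<rho> v"
      by (rule mult_left_mono)
    then show ?thesis by (simp add: algebra_simps)
  qed
  also have "U0 + (U1 - U0) * \<alpha> = Tp \<rho> d A (Suc n) {i} e"
  proof -
    have ii: "integrable (measure_pmf \<rho>) (\<lambda>y. (U1 - U0) * indicator (A i) y :: real)"
      by (intro measure_pmf.integrable_const_bound[where B="\<bar>U1 - U0\<bar>"]) (auto simp: indicator_def)
    have "measure_pmf.expectation \<rho> (\<lambda>y. U0 + (U1 - U0) * indicator (A i) y)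
        = measure_pmf.expectation \<rho> (\<lambda>y. U0) + measure_pmf.expectation \<rho> (\<lambda>y. (U1 - U0) * indicator (A i) y)"
      using ii by (intro Bochner_Integration.integral_add) auto
    then show ?thesis unfolding Tp_Suc u_def[symmetric] u_eq by (simp add: \<alpha>_def)
  qed
  also have "measure_pmf.expectation \<rho> v = Tp \<rho> d A (Suc n) J e"
    unfolding Tp_Suc v_def ..
  finally show ?case .
qed

lemma Tp_empty: "Tp \<rho> d A n {} e = 1"
  by (simp add: Tp_def)

lemma Tp_prod:
  assumes "finite K" "\<And>i j. i \<in> K \<Longrightarrow> j \<in> K \<Longrightarrow> i \<noteq> j \<Longrightarrow> A i \<inter> A j = {}"
  shows "Tp \<rho> d A n K e \<le> (\<Prod>j\<in>K. Tp \<rho> d A n {j} e)"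
  using assms
proof (induction K rule: finite_induct)
  case empty
  then show ?case by (simp add: Tp_empty)
next
  case (insert i J)
  have "Tp \<rho> d A n (insert i J) e \<le> Tp \<rho> d A n {i} e * Tp \<rho> d A n J e"
    using insert.hyps insert.prems by (intro Tp_insert_le) auto
  also have "\<dots> \<le> Tp \<rho> d A n {i} e * (\<Prod>j\<in>J. Tp \<rho> d A n {j} e)"
    using insert.IH insert.prems by (intro mult_left_mono) (auto simp: Tp_nonneg)
  finally show ?case using insert.hyps by simp
qed

lemma map_pmf_mem_bernoulli:
  "map_pmf (\<lambda>y. y \<in> B) \<rho> = bernoulli_pmf (measure_pmf.prob \<rho> B)"
proof (rule pmf_eqI)
  fix b :: bool
  have 1: "(\<lambda>y. y \<in> B) -` {True} = B" by auto
  have 2: "(\<lambda>y. y \<in> B) -` {False} = -B" by auto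
  show "pmf (map_pmf (\<lambda>y. y \<in> B) \<rho>) b = pmf (bernoulli_pmf (measure_pmf.prob \<rho> B)) b"
    using measure_pmf.prob_compl[of B \<rho>] by (cases b) (simp_all add: pmf_map 1 2 Compl_eq_Diff_UNIV)
qed

lemma cnt_binomial:
  "map_pmf (cnt n B) (Pi_pmf {..<n} d (\<lambda>_. \<rho>)) = binomial_pmf n (measure_pmf.prob \<rho> B)"
proof -
  have "Pi_pmf {..<n} (d \<in> B) (\<lambda>_. map_pmf (\<lambda>y. y \<in> B) \<rho>)
        = map_pmf (\<lambda>h. (\<lambda>y. y \<in> B) \<circ> h) (Pi_pmf {..<n} d (\<lambda>_. \<rho>))"
    by (intro Pi_pmf_map) auto
  note eq = this
  have "map_pmf (cnt n B) (Pi_pmf {..<n} d (\<lambda>_. \<rho>))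
      = map_pmf (\<lambda>f. card {x\<in>{..<n}. f x}) (Pi_pmf {..<n} (d \<in> B) (\<lambda>_. bernoulli_pmf (measure_pmf.prob \<rho> B)))"
  proof -
    have "cnt n B = (\<lambda>x. card {xa\<in>{..<n}. x xa \<in> B})" by (auto simp: cnt_def fun_eq_iff)
    then show ?thesis using eq by (simp add: map_pmf_mem_bernoulli pmf.map_comp o_def)
  qed
  also have "\<dots> = binomial_pmf n (measure_pmf.prob \<rho> B)"
    by (rule binomial_pmf_altdef'[symmetric]) auto
  finally show ?thesis .
qed

lemma Tp_single_le:
  assumes "real m \<le> e j"
  shows "Tp \<rho> d A n {j} e \<le> 1 - pmf (binomial_pmf n (measure_pmf.prob \<rho> (A j))) m"
proof -
  let ?P = "Pi_pmf {..<n} d (\<lambda>_. \<rho>)"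
  have "pmf (binomial_pmf n (measure_pmf.prob \<rho> (A j))) m = measure_pmf.prob ?P (cnt n (A j) -` {m})"
    unfolding cnt_binomial[symmetric, where B="A j" and d=d and \<rho>=\<rho> and n=n] by (rule pmf_map)
  also have "\<dots> \<le> measure_pmf.prob ?P (- {f. real (cnt n (A j) f) > e j})"
    using assms by (intro measure_pmf.finite_measure_mono) auto
  also have "\<dots> = 1 - Tp \<rho> d A n {j} e"
    using measure_pmf.prob_compl[of "{f. real (cnt n (A j) f) > e j}" ?P]
    by (simp add: Tp_def Compl_eq_Diff_UNIV)
  finally show ?thesis by simp
qed

lemma Pi_pmf_curry:
  assumes "finite A" "finite B"
  shows "map_pmf (\<lambda>X t j. X (t,j)) (Pi_pmf (A \<times> B) dd (\<lambda>_. \<mu>))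
       = Pi_pmf A (\<lambda>_. dd) (\<lambda>_. Pi_pmf B dd (\<lambda>_. \<mu>))"
proof (rule pmf_eqI)
  fix Y :: "'a \<Rightarrow> 'b \<Rightarrow> 'c"
  have inj: "inj (\<lambda>X t j. X (t,j) :: 'c)"
    by (rule injI) (auto simp: fun_eq_iff)
  have Y: "Y = (\<lambda>t j. (case_prod Y) (t,j))" by simp
  have "pmf (map_pmf (\<lambda>X t j. X (t,j)) (Pi_pmf (A \<times> B) dd (\<lambda>_. \<mu>))) Y
      = pmf (Pi_pmf (A \<times> B) dd (\<lambda>_. \<mu>)) (case_prod Y)"
    by (subst Y, subst pmf_map_inj'[OF inj]) simp
  also have "\<dots> = pmf (Pi_pmf A (\<lambda>_. dd) (\<lambda>_. Pi_pmf B dd (\<lambda>_. \<mu>))) Y"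
  proof (cases "\<forall>x. x \<notin> A \<times> B \<longrightarrow> case_prod Y x = dd")
    case True
    then have out: "\<forall>a. a \<notin> A \<longrightarrow> Y a = (\<lambda>_. dd)" and inB: "\<And>a. \<forall>b. b \<notin> B \<longrightarrow> Y a b = dd"
      by (auto simp: fun_eq_iff)
    have "pmf (Pi_pmf (A \<times> B) dd (\<lambda>_. \<mu>)) (case_prod Y) = (\<Prod>x\<in>A\<times>B. pmf \<mu> (case_prod Y x))"
      using True assms by (simp add: pmf_Pi)
    also have "\<dots> = (\<Prod>a\<in>A. \<Prod>b\<in>B. pmf \<mu> (Y a b))"
      by (simp add: prod.cartesian_product case_prod_beta')
    also have "\<dots> = pmf (Pi_pmf A (\<lambda>_. dd) (\<lambda>_. Pi_pmf B dd (\<lambda>_. \<mu>))) Y"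
      using out inB assms by (simp add: pmf_Pi)
    finally show ?thesis .
  next
    case False
    then obtain a b where ab: "(a,b) \<notin> A \<times> B" "Y a b \<noteq> dd" by auto
    have "pmf (Pi_pmf (A \<times> B) dd (\<lambda>_. \<mu>)) (case_prod Y) = 0"
      using False assms by (auto simp: pmf_Pi)
    moreover have "pmf (Pi_pmf A (\<lambda>_. dd) (\<lambda>_. Pi_pmf B dd (\<lambda>_. \<mu>))) Y = 0"
    proof (cases "a \<in> A")
      case False
      then show ?thesis using ab assms by (subst pmf_Pi) (auto simp: fun_eq_iff)
    next
      case True
      with ab have "b \<notin> B" by auto
      have "pmf (Pi_pmf B dd (\<lambda>_. \<mu>)) (Y a) = 0"
        using ab \<open>b \<notin> B\<close> assms by (subst pmf_Pi) auto
      then show ?thesis using True assms by (subst pmf_Pi) (auto intro: prod_zero)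
    qed
    ultimately show ?thesis by simp
  qed
  finally show "pmf (map_pmf (\<lambda>X t j. X (t,j)) (Pi_pmf (A \<times> B) dd (\<lambda>_. \<mu>))) Y
      = pmf (Pi_pmf A (\<lambda>_. dd) (\<lambda>_. Pi_pmf B dd (\<lambda>_. \<mu>))) Y" .
qed

lemma prob_single_row:
  fixes p :: nat
  assumes "S \<subseteq> {..<p}" "i \<in> S" "0 \<le> q" "q \<le> 1"
  shows "measure_pmf.prob (Pi_pmf {..<p} False (\<lambda>_. bernoulli_pmf q)) {x. x i \<and> (\<forall>j\<in>S-{i}. \<not> x j)}
       = q * (1 - q) ^ (card S - 1)"
proof -
  define B where "B = (\<lambda>x. if x = i then {True} else if x \<in> S then {False} else (UNIV :: bool set))"
  have fin: "finite S" by (rule finite_subset[OF assms(1)]) simp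
  have eq: "{x. x i \<and> (\<forall>j\<in>S-{i}. \<not> x j)} = Pi {..<p} B"
  proof (rule set_eqI, rule iffI)
    fix x assume x: "x \<in> {x. x i \<and> (\<forall>j\<in>S-{i}. \<not> x j)}"
    show "x \<in> Pi {..<p} B"
    proof (rule Pi_I)
      fix y show "x y \<in> B y" using x by (cases "y = i") (auto simp: B_def)
    qed
  next
    fix x assume x: "x \<in> Pi {..<p} B"
    have "i \<in> {..<p}" using assms by auto
    hence "x i \<in> B i" using x by blast
    hence 1: "x i" by (simp add: B_def)
    have "\<not> x j" if "j \<in> S - {i}" for j
    proof -
      have "j \<in> {..<p}" using assms that by auto
      hence "x j \<in> B j" using x by blast
      thus ?thesis using that by (simp add: B_def)
    qed
    with 1 show "x \<in> {x. x i \<and> (\<forall>j\<in>S-{i}. \<not> x j)}" by blast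
  qed
  have pB: "measure_pmf.prob (bernoulli_pmf q) (B x) = (if x = i then q else if x \<in> S then 1 - q else 1)" for x
  proof -
    have "measure_pmf.prob (bernoulli_pmf q) {True} = q" "measure_pmf.prob (bernoulli_pmf q) {False} = 1 - q"
      using assms by (simp_all add: measure_pmf_single)
    then show ?thesis by (auto simp: B_def)
  qed
  have "measure_pmf.prob (Pi_pmf {..<p} False (\<lambda>_. bernoulli_pmf q)) (Pi {..<p} B)
     = (\<Prod>x\<in>{..<p}. measure_pmf.prob (bernoulli_pmf q) (B x))"
    by (rule measure_Pi_pmf_Pi) simp
  also have "\<dots> = (\<Prod>x\<in>{..<p}. (if x = i then q else if x \<in> S then 1 - q else 1))"
    by (simp add: pB)
  also have "\<dots> = (\<Prod>x\<in>S. (if x = i then q else if x \<in> S then 1 - q else 1))"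
    using assms(1,2) by (intro prod.mono_neutral_right) auto
  also have "\<dots> = q * (\<Prod>x\<in>S-{i}. (if x = i then q else if x \<in> S then 1 - q else 1))"
    using assms fin by (subst prod.remove[of S i]) auto
  also have "(\<Prod>x\<in>S-{i}. (if x = i then q else if x \<in> S then 1 - q else 1)) = (\<Prod>x\<in>S-{i}. 1 - q)"
    by (intro prod.cong) auto
  also have "\<dots> = (1 - q) ^ (card S - 1)"
    using assms fin by (simp add: card_Diff_singleton)
  finally show ?thesis using eq by simp
qed

lemma fixed_S_bound:
  assumes "S \<subseteq> {..<p}" "card S = k" "0 \<le> q" "q \<le> 1" "real m \<le> c"
  shows "measure_pmf.prob (test_matrix_pmf n p q) {X. \<exists>i\<in>S. real (Mcount n X S i) \<le> c}
     \<ge> 1 - (1 - pmf (binomial_pmf n (q * (1 - q) ^ (k - 1))) m) ^ k"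
proof -
  define \<rho> where "\<rho> = Pi_pmf {..<p} False (\<lambda>_. bernoulli_pmf q)"
  define A where "A = (\<lambda>i. {x :: nat \<Rightarrow> bool. x i \<and> (\<forall>j\<in>S-{i}. \<not> x j)})"
  define P where "P = Pi_pmf {..<n} (\<lambda>_. False) (\<lambda>_. \<rho>)"
  define \<beta> where "\<beta> = pmf (binomial_pmf n (q * (1 - q) ^ (k - 1))) m"
  have fin: "finite S" by (rule finite_subset[OF assms(1)]) simp
  have map: "map_pmf (\<lambda>X t j. X (t,j)) (test_matrix_pmf n p q) = P"
    unfolding test_matrix_pmf_def P_def \<rho>_def by (rule Pi_pmf_curry) auto
  have Mc: "Mcount n X S i = cnt n (A i) (\<lambda>t j. X (t,j))" for X i
    unfolding Mcount_def cnt_def A_def by simp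
  have "measure_pmf.prob (test_matrix_pmf n p q) {X. \<exists>i\<in>S. real (Mcount n X S i) \<le> c}
      = measure_pmf.prob P {Y. \<exists>i\<in>S. real (cnt n (A i) Y) \<le> c}"
    unfolding map[symmetric] by (simp add: Mc vimage_def)
  also have "\<dots> = 1 - Tp \<rho> (\<lambda>_. False) A n S (\<lambda>_. c)"
  proof -
    have "{Y. \<exists>i\<in>S. real (cnt n (A i) Y) \<le> c} = UNIV - {f. \<forall>j\<in>S. real (cnt n (A j) f) > c}"
      by (auto simp: not_less)
    then show ?thesis
      using measure_pmf.prob_compl[of "{f. \<forall>j\<in>S. real (cnt n (A j) f) > c}" P]
      by (simp add: Tp_def P_def)
  qed
  finally have h1: "measure_pmf.prob (test_matrix_pmf n p q) {X. \<exists>i\<in>S. real (Mcount n X S i) \<le> c} = 1 - Tp \<rho> (\<lambda>_. False) A n S (\<lambda>_. c)" .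
  have "Tp \<rho> (\<lambda>_. False) A n S (\<lambda>_. c) \<le> (\<Prod>j\<in>S. Tp \<rho> (\<lambda>_. False) A n {j} (\<lambda>_. c))"
    using fin by (intro Tp_prod) (auto simp: A_def)
  also have "\<dots> \<le> (\<Prod>j\<in>S. 1 - \<beta>)"
  proof (intro prod_mono conjI)
    fix j assume j: "j \<in> S"
    show "0 \<le> Tp \<rho> (\<lambda>_. False) A n {j} (\<lambda>_. c)" by (rule Tp_nonneg)
    have "measure_pmf.prob \<rho> (A j) = q * (1 - q) ^ (k - 1)"
      unfolding \<rho>_def A_def using prob_single_row[OF assms(1) j assms(3,4)] assms(2) by simp
    then show "Tp \<rho> (\<lambda>_. False) A n {j} (\<lambda>_. c) \<le> 1 - \<beta>"
      using Tp_single_le[of m "\<lambda>_. c" j \<rho> "\<lambda>_. False" A n] assms(5) by (simp add: \<beta>_def)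
  qed
  also have "\<dots> = (1 - \<beta>) ^ k" using assms(2) by simp
  finally show ?thesis using h1 by (simp add: \<beta>_def)
qed

lemma fact_binom_ge:
  "m \<le> n \<Longrightarrow> (real n - real m) ^ m \<le> fact m * real (n choose m)"
proof (induction m arbitrary: n)
  case 0 then show ?case by simp
next
  case (Suc m)
  then obtain n' where n: "n = Suc n'" by (cases n) auto
  with Suc.prems have mn: "m \<le> n'" by simp
  have "(real n - real (Suc m)) ^ Suc m = (real n' - real m) * (real n' - real m) ^ m"
    by (simp add: n)
  also have "\<dots> \<le> real (Suc n') * (fact m * real (n' choose m))"
    using Suc.IH[OF mn] mn by (intro mult_mono) auto
  also have "real (Suc n') * (fact m * real (n' choose m)) = fact m * real (Suc n' * (n' choose m))"
    by (simp only: of_nat_mult mult_ac)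
  also have "Suc n' * (n' choose m) = (Suc n' choose Suc m) * Suc m"
    by (rule Suc_times_binomial_eq)
  also have "fact m * real ((Suc n' choose Suc m) * Suc m) = fact (Suc m) * real (n choose Suc m)"
    by (simp add: n algebra_simps)
  finally show ?case .
qed

lemma ln_Suc_ge: "1 / (real m + 1) \<le> ln (1 + 1 / real m)" if "m \<ge> 1"
proof -
  have "ln (1 - 1 / (real m + 1)) \<le> - (1 / (real m + 1))"
    using that by (intro ln_one_minus_pos_upper_bound) auto
  moreover have "1 - 1 / (real m + 1) = 1 / (1 + 1 / real m)"
    using that by (simp add: field_simps)
  moreover have "ln (1 / (1 + 1 / real m)) = - ln (1 + 1 / real m)"
    using that by (simp add: ln_div)
  ultimately show ?thesis by simp
qed

lemma fact_upper: "m \<ge> 1 \<Longrightarrow> fact m \<le> real m ^ (m + 1) * exp (1 - real m)"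
proof (induction m rule: dec_induct)
  case base then show ?case by simp
next
  case (step m)
  have key: "exp 1 * real m ^ (m + 1) \<le> (real m + 1) ^ (m + 1)"
  proof -
    have "1 \<le> (real m + 1) * ln (1 + 1 / real m)"
      using ln_Suc_ge[OF step.hyps(1)] step.hyps(1) by (simp add: field_simps)
    hence "exp 1 \<le> exp ((real m + 1) * ln (1 + 1 / real m))" by simp
    also have "\<dots> = (1 + 1 / real m) ^ (m + 1)"
    proof -
      have "(real m + 1) * ln (1 + 1 / real m) = real (m + 1) * ln (1 + 1 / real m)" by simp
      also have "exp \<dots> = exp (ln (1 + 1 / real m)) ^ (m + 1)" by (rule exp_of_nat_mult)
      also have "\<dots> = (1 + 1 / real m) ^ (m + 1)" using step.hyps(1) by (subst exp_ln) (auto simp: add_pos_pos)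
      finally show ?thesis .
    qed
    finally have "exp 1 * real m ^ (m + 1) \<le> (1 + 1 / real m) ^ (m + 1) * real m ^ (m + 1)"
      by (intro mult_right_mono) auto
    also have "\<dots> = (real m + 1) ^ (m + 1)"
      using step.hyps(1) by (simp add: power_mult_distrib[symmetric] field_simps)
    finally show ?thesis .
  qed
  have "fact (Suc m) = (real m + 1) * fact m" by simp
  also have "\<dots> \<le> (real m + 1) * (real m ^ (m + 1) * exp (1 - real m))"
    using step.IH by (intro mult_left_mono) auto
  also have "\<dots> = (real m + 1) * (exp 1 * real m ^ (m + 1)) * exp (- real m)"
    by (simp add: exp_diff exp_minus field_simps)
  also have "\<dots> \<le> (real m + 1) * (real m + 1) ^ (m + 1) * exp (- real m)"
    using key by (intro mult_right_mono mult_left_mono) auto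
  also have "\<dots> = real (Suc m) ^ (Suc m + 1) * exp (1 - real (Suc m))"
    by (simp add: add.commute)
  finally show ?case .
qed

lemma one_minus_pow_ge: assumes "0 \<le> r" "r < 1" shows "exp (- real n * r / (1 - r)) \<le> (1 - r) ^ n"
proof -
  have "ln (1 / (1 - r)) \<le> 1 / (1 - r) - 1" using assms by (intro ln_le_minus_one) auto
  hence "- r / (1 - r) \<le> ln (1 - r)" using assms by (simp add: ln_div field_simps)
  hence "real n * (- r / (1 - r)) \<le> real n * ln (1 - r)" by (intro mult_left_mono) auto
  hence "exp (- real n * r / (1 - r)) \<le> exp (real n * ln (1 - r))" by simp
  also have "\<dots> = exp (ln (1 - r)) ^ n" by (rule exp_of_nat_mult)
  also have "\<dots> = (1 - r) ^ n" using assms by simp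
  finally show ?thesis .
qed

lemma binom_lower:
  fixes m n :: nat and c r :: real
  assumes m1: "1 \<le> m" and mc: "real m \<le> c" and cm: "c - 1 \<le> real m"
    and cx: "c \<le> (real n - real m) * r" and r0: "0 < r" and r1: "r < 1"
  shows "exp ((c - 1) * (ln (((real n - real m) * r) / c) + 1) - ln c - 1 - real n * r / (1 - r))
         \<le> pmf (binomial_pmf n r) m"
proof -
  define x where "x = (real n - real m) * r"
  define E where "E = exp (- real n * r / (1 - r))"
  have c0: "c > 0" using m1 mc by simp
  have x0: "x > 0" using cx c0 by (simp add: x_def)
  have nm: "real n - real m > 0" using x0 r0 unfolding x_def by (simp add: zero_less_mult_iff)
  hence mn: "m \<le> n" by simp
  have xc: "c \<le> x" using cx by (simp add: x_def)
  have fpos: "fact m > (0::real)" by simp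
  have "pmf (binomial_pmf n r) m = real (n choose m) * r ^ m * (1 - r) ^ (n - m)"
    using r0 r1 by simp
  also have "\<dots> \<ge> ((real n - real m) ^ m / fact m) * r ^ m * E"
  proof -
    have "(real n - real m) ^ m / fact m \<le> real (n choose m)"
      using fact_binom_ge[OF mn] fpos by (simp add: divide_le_eq mult.commute)
    moreover have "E \<le> (1 - r) ^ n" unfolding E_def using r0 r1 by (intro one_minus_pow_ge) auto
    moreover have "(1 - r) ^ n \<le> (1 - r) ^ (n - m)" using r0 r1 by (intro power_decreasing) auto
    ultimately have "E \<le> (1 - r) ^ (n - m)" "(real n - real m) ^ m / fact m \<le> real (n choose m)" by auto
    then show ?thesis using r0 r1 nm
      by (intro mult_mono) (auto simp: E_def)
  qed
  finally have 1: "x ^ m / fact m * E \<le> pmf (binomial_pmf n r) m"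
    by (simp add: x_def power_mult_distrib)
  have "x ^ m / (real m ^ (m + 1) * exp (1 - real m)) * E \<le> x ^ m / fact m * E"
    using fact_upper[OF m1] x0 fpos m1 by (intro mult_right_mono divide_left_mono) (auto simp: E_def)
  also note 1
  finally have 2: "x ^ m / (real m ^ (m + 1) * exp (1 - real m)) * E \<le> pmf (binomial_pmf n r) m" .
  have "x ^ m / (real m ^ (m + 1) * exp (1 - real m)) * E
      = exp (real m * ln x - real (m + 1) * ln (real m) - (1 - real m) - real n * r / (1 - r))"
  proof -
    have a: "x ^ m = exp (real m * ln x)" using x0 by (simp add: exp_of_nat_mult)
    have b: "real m ^ (m + 1) = exp (real (m + 1) * ln (real m))"
      using m1 by (subst exp_of_nat_mult) simp
    have e: "exp (A - B - C - D) = exp A / (exp B * exp C) * exp (- D)" for A B C D :: real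
      by (simp add: exp_diff exp_minus exp_add field_simps)
    show ?thesis unfolding a b E_def e by simp
  qed
  also have "real m * ln x - real (m + 1) * ln (real m) - (1 - real m)
           = real m * (ln (x / real m) + 1) - ln (real m) - 1"
    using x0 m1 by (simp add: ln_div algebra_simps)
  finally have 3: "exp (real m * (ln (x / real m) + 1) - ln (real m) - 1 - real n * r / (1 - r))
       \<le> pmf (binomial_pmf n r) m" using 2 by simp
  have "ln (x / c) + 1 \<ge> 1" using xc c0 by simp
  have "(c - 1) * (ln (x / c) + 1) \<le> real m * (ln (x / c) + 1)"
    using cm \<open>ln (x / c) + 1 \<ge> 1\<close> by (intro mult_right_mono) auto
  also have "\<dots> \<le> real m * (ln (x / real m) + 1)"
    using mc x0 m1 by (intro mult_left_mono add_right_mono ln_mono) (auto intro!: divide_left_mono)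
  finally have 4: "(c - 1) * (ln (x / c) + 1) \<le> real m * (ln (x / real m) + 1)" .
  have 5: "ln (real m) \<le> ln c" using mc m1 by simp
  have "exp ((c - 1) * (ln (x / c) + 1) - ln c - 1 - real n * r / (1 - r))
      \<le> exp (real m * (ln (x / real m) + 1) - ln (real m) - 1 - real n * r / (1 - r))"
    using 4 5 by simp
  with 3 show ?thesis unfolding x_def by (meson order_trans)
qed

lemma pair_bound:
  assumes "k \<le> p" "0 \<le> q" "q \<le> 1" "real m \<le> c"
  shows "1 - (1 - pmf (binomial_pmf n (q * (1 - q) ^ (k - 1))) m) ^ k
     \<le> measure_pmf.prob (pair_pmf (defective_set_pmf p k) (test_matrix_pmf n p q))
          {(S, X). \<exists>i\<in>S. real (Mcount n X S i) \<le> c}"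
proof -
  define Sets where "Sets = {S. S \<subseteq> {..<p} \<and> card S = k}"
  have fin: "finite Sets" unfolding Sets_def
    by (rule finite_subset[of _ "Pow {..<p}"]) auto
  have ne: "Sets \<noteq> {}" unfolding Sets_def using assms(1)
    by (auto intro!: exI[of _ "{..<k}"])
  show ?thesis
    unfolding measure_pair_pmf_integral defective_set_pmf_def Sets_def[symmetric]
  proof (rule measure_pmf.integral_ge_const)
    show "integrable (measure_pmf (pmf_of_set Sets))
      (\<lambda>x. measure_pmf.prob (test_matrix_pmf n p q) {y. (x, y) \<in> {(S, X). \<exists>i\<in>S. real (Mcount n X S i) \<le> c}})"
      by (intro measure_pmf.integrable_const_bound[where B=1]) auto
    show "AE x in measure_pmf (pmf_of_set Sets).
       1 - (1 - pmf (binomial_pmf n (q * (1 - q) ^ (k - 1))) m) ^ k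
       \<le> measure_pmf.prob (test_matrix_pmf n p q) {y. (x, y) \<in> {(S, X). \<exists>i\<in>S. real (Mcount n X S i) \<le> c}}"
    proof (rule AE_pmfI)
      fix S assume "S \<in> set_pmf (pmf_of_set Sets)"
      hence S: "S \<subseteq> {..<p}" "card S = k" using fin ne by (auto simp: Sets_def)
      show "1 - (1 - pmf (binomial_pmf n (q * (1 - q) ^ (k - 1))) m) ^ k
       \<le> measure_pmf.prob (test_matrix_pmf n p q) {y. (S, y) \<in> {(S, X). \<exists>i\<in>S. real (Mcount n X S i) \<le> c}}"
        using fixed_S_bound[OF S assms(2,3,4), of n] by simp
    qed
  qed
qed

lemma pow_exp_bound:
  assumes "0 \<le> \<beta>" "\<beta> \<le> 1"
  shows "(1 - \<beta>) ^ k \<le> exp (- (real k * \<beta>))"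
proof -
  have "(1 - \<beta>) ^ k \<le> exp (- \<beta>) ^ k"
    using assms by (intro power_mono) (auto simp: exp_ge_add_one_self[of "-\<beta>", simplified])
  also have "\<dots> = exp (- (real k * \<beta>))" by (simp add: exp_of_nat_mult[symmetric])
  finally show ?thesis .
qed

lemma final_step:
  fixes P K \<beta> h :: "nat \<Rightarrow> real"
  assumes "\<forall>\<^sub>F p in sequentially. 1 - exp (- (K p * \<beta> p)) \<le> P p \<and> P p \<le> 1"
    and "\<forall>\<^sub>F p in sequentially. exp (h p) \<le> K p * \<beta> p"
    and "((\<lambda>p. h p / ln (real p)) \<longlongrightarrow> l) sequentially" "l > 0"
  shows "(P \<longlongrightarrow> 1) sequentially"
proof -
  have L: "filterlim (\<lambda>p::nat. ln (real p)) at_top sequentially" by real_asymp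
  have "filterlim (\<lambda>p. h p / ln (real p) * ln (real p)) at_top sequentially"
    by (rule filterlim_tendsto_pos_mult_at_top[OF assms(3,4) L])
  moreover have ev: "\<forall>\<^sub>F p in sequentially. h p / ln (real p) * ln (real p) = h p"
    using eventually_gt_at_top[of 1] by eventually_elim auto
  ultimately have hinf: "filterlim h at_top sequentially"
    using filterlim_cong[OF refl refl ev] by simp
  have "filterlim (\<lambda>p. exp (h p)) at_top sequentially"
    by (rule filterlim_compose[OF exp_at_top hinf])
  hence "filterlim (\<lambda>p. K p * \<beta> p) at_top sequentially"
    by (rule filterlim_at_top_mono) (use assms(2) in auto)
  hence "filterlim (\<lambda>p. - (K p * \<beta> p)) at_bot sequentially"
    by (simp add: filterlim_uminus_at_top)
  hence "((\<lambda>p. exp (- (K p * \<beta> p))) \<longlongrightarrow> 0) sequentially"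
    by (rule filterlim_compose[OF exp_at_bot])
  hence lo: "((\<lambda>p. 1 - exp (- (K p * \<beta> p))) \<longlongrightarrow> 1 - 0) sequentially"
    by (intro tendsto_diff tendsto_const)
  have e1: "\<forall>\<^sub>F p in sequentially. 1 - exp (- (K p * \<beta> p)) \<le> P p"
    using assms(1) by (rule eventually_mono) simp
  have e2: "\<forall>\<^sub>F p in sequentially. P p \<le> 1"
    using assms(1) by (rule eventually_mono) simp
  show ?thesis using tendsto_sandwich[OF e1 e2 lo[simplified] tendsto_const] .
qed

lemma Kr_lim:
  fixes k :: "nat \<Rightarrow> nat" and \<nu> :: real
  assumes Kinf: "filterlim (\<lambda>p. real (k p)) at_top F" and nu: "\<nu> > 0"
  shows "((\<lambda>p. real (k p) * ((\<nu> / real (k p)) * (1 - \<nu> / real (k p)) ^ (k p - 1))) \<longlongrightarrow> \<nu> * exp (- \<nu>)) F"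
proof -
  have invK: "((\<lambda>p. 1 / real (k p)) \<longlongrightarrow> 0) F"
    using tendsto_inverse_0_at_top[OF Kinf] by (simp add: inverse_eq_divide)
  have q0: "((\<lambda>p. \<nu> / real (k p)) \<longlongrightarrow> 0) F"
    using tendsto_mult[OF tendsto_const invK, of \<nu>] by simp
  have e1: "((\<lambda>p. (1 + (- \<nu>) / real (k p)) powr real (k p)) \<longlongrightarrow> exp (- \<nu>)) F"
    by (rule filterlim_compose[OF tendsto_exp_limit_at_top Kinf])
  have e2: "((\<lambda>p. 1 - \<nu> / real (k p)) \<longlongrightarrow> 1 - 0) F"
    by (intro tendsto_diff tendsto_const q0)
  have lim: "((\<lambda>p. \<nu> * ((1 + (- \<nu>) / real (k p)) powr real (k p)) / (1 - \<nu> / real (k p))) \<longlongrightarrow> \<nu> * exp (- \<nu>) / (1 - 0)) F"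
    by (intro tendsto_divide tendsto_mult tendsto_const e1 e2) simp
  have ev: "\<forall>\<^sub>F p in F. real (k p) > 2 * \<nu>"
    using Kinf by (rule filterlim_at_top_dense[THEN iffD1, rule_format])
  have "\<forall>\<^sub>F p in F. \<nu> * ((1 + (- \<nu>) / real (k p)) powr real (k p)) / (1 - \<nu> / real (k p))
         = real (k p) * ((\<nu> / real (k p)) * (1 - \<nu> / real (k p)) ^ (k p - 1))"
    using ev
  proof eventually_elim
    case (elim p)
    define j where "j = k p - 1"
    have kj: "k p = Suc j" using elim nu unfolding j_def by (cases "k p") auto
    define y where "y = 1 - \<nu> / real (k p)"
    have y0: "y > 0" using elim nu by (simp add: y_def field_simps)
    have b: "1 + (- \<nu>) / real (k p) = y" by (simp add: y_def)
    have "y powr real (k p) = y ^ k p" using y0 by (rule powr_realpow)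
    also have "\<dots> = y * y ^ j" by (simp add: kj)
    finally have 1: "y powr real (k p) = y * y ^ j" .
    have Kp: "real (k p) > 0" using elim nu by linarith
    show ?case unfolding b 1 using y0 Kp by (simp add: j_def y_def[symmetric])
  qed
  then show ?thesis using Lim_transform_eventually[OF lim] by simp
qed

theorem lemma2:
  fixes \<theta> \<nu> \<gamma> \<Phi> :: real and k n :: "nat \<Rightarrow> nat"
  assumes "0 < \<theta>" "\<theta> < 1"
    and "(\<lambda>p. real (k p)) \<in> \<Theta>(\<lambda>p. real p powr \<theta>)"
    and "0 < \<nu>" "0 < \<gamma>" "0 \<le> \<Phi>" "\<Phi> < 1"
    and "\<And>p. n p = nat \<lceil>\<gamma> * real (k p) * ln (real p)\<rceil>"
    and "\<theta> > Dfun 1 \<Phi> * \<nu> * exp (- \<nu>) * \<gamma>"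
  shows "((\<lambda>p. measure_pmf.prob
            (pair_pmf (defective_set_pmf p (k p)) (test_matrix_pmf (n p) p (\<nu> / real (k p))))
            {(S, X). \<exists>i \<in> S. real (Mcount (n p) X S i) \<le> \<Phi> * \<nu> * exp (- \<nu>) * \<gamma> * ln (real p)})
         \<longlongrightarrow> 1) at_top"
proof -
  note th0 = assms(1) and th1 = assms(2) and nu = assms(4) and ga = assms(5)
    and Ph0 = assms(6) and Ph1 = assms(7) and nd = assms(8) and key = assms(9)
  define a where "a = \<nu> * exp (- \<nu>) * \<gamma>"
  define A0 where "A0 = \<Phi> * \<nu> * exp (- \<nu>) * \<gamma>"
  define K where "K = (\<lambda>p. real (k p))"
  define L where "L = (\<lambda>p::nat. ln (real p))"
  define q where "q = (\<lambda>p. \<nu> / K p)"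
  define r where "r = (\<lambda>p. q p * (1 - q p) ^ (k p - 1))"
  define x where "x = (\<lambda>p. real (n p) * r p)"
  define c where "c = (\<lambda>p. \<Phi> * \<nu> * exp (- \<nu>) * \<gamma> * ln (real p))"
  define m where "m = (\<lambda>p. nat \<lfloor>c p\<rfloor>)"
  define \<beta> where "\<beta> = (\<lambda>p. pmf (binomial_pmf (n p) (r p)) (m p))"
  define P where "P = (\<lambda>p. measure_pmf.prob
            (pair_pmf (defective_set_pmf p (k p)) (test_matrix_pmf (n p) p (\<nu> / real (k p))))
            {(S, X). \<exists>i \<in> S. real (Mcount (n p) X S i) \<le> \<Phi> * \<nu> * exp (- \<nu>) * \<gamma> * ln (real p)})"
  have a0: "a > 0" using nu ga by (simp add: a_def)
  have cA: "c p = A0 * L p" for p by (simp add: c_def A0_def L_def)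
  have A0a: "A0 = \<Phi> * a" by (simp add: A0_def a_def)

  obtain C1 where C1: "C1 > 0" "\<forall>\<^sub>F p in at_top. norm (K p) \<ge> C1 * norm (real p powr \<theta>)"
    using bigthetaD2[OF assms(3)] unfolding K_def by (elim landau_omega.bigE) auto
  obtain C2 where C2: "C2 > 0" "\<forall>\<^sub>F p in at_top. norm (K p) \<le> C2 * norm (real p powr \<theta>)"
    using bigthetaD1[OF assms(3)] unfolding K_def by (elim landau_o.bigE) auto
  have K1: "\<forall>\<^sub>F p in at_top. C1 * real p powr \<theta> \<le> K p"
    using C1(2) by eventually_elim (simp add: K_def)
  have K2: "\<forall>\<^sub>F p in at_top. K p \<le> C2 * real p powr \<theta>"
    using C2(2) by eventually_elim (simp add: K_def)
  have Linf: "filterlim L at_top at_top" unfolding L_def by real_asymp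
  have pth: "filterlim (\<lambda>p::nat. real p powr \<theta>) at_top at_top" using th0 by real_asymp
  have "filterlim (\<lambda>p::nat. C1 * real p powr \<theta>) at_top at_top"
    using C1(1) by (intro filterlim_tendsto_pos_mult_at_top[OF tendsto_const _ pth])
  hence Kinf: "filterlim K at_top at_top"
    by (rule filterlim_at_top_mono) (use K1 in auto)
  have kp: "\<forall>\<^sub>F p in at_top. k p \<le> p"
  proof -
    have "((\<lambda>p::nat. C2 * real p powr \<theta> / real p) \<longlongrightarrow> 0) at_top" using th1 by real_asymp
    hence "\<forall>\<^sub>F p in at_top. C2 * real p powr \<theta> / real p < 1" by (rule order_tendstoD) simp
    thus ?thesis using K2 eventually_gt_at_top[of 0]
      by eventually_elim (auto simp: K_def divide_less_eq)
  qed
  have KQ: "\<forall>\<^sub>F p in at_top. K p > 2 * \<nu> + 1"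
    using Kinf by (rule filterlim_at_top_dense[THEN iffD1, rule_format]) 
  have qpos: "\<forall>\<^sub>F p in at_top. 0 < q p \<and> q p < 1 / 2 \<and> k p \<ge> 1"
    using KQ by eventually_elim (use nu in \<open>auto simp: q_def K_def field_simps\<close>)
  have rpos: "\<forall>\<^sub>F p in at_top. 0 < r p \<and> r p < 1"
    using qpos
  proof eventually_elim
    case (elim p)
    have "r p \<le> q p" unfolding r_def using elim by (intro mult_left_le power_le_one) auto
    moreover have "0 < r p" unfolding r_def using elim by (intro mult_pos_pos zero_less_power) auto
    ultimately show ?case using elim by auto
  qed
  have invK: "((\<lambda>p. 1 / K p) \<longlongrightarrow> 0) at_top"
    using tendsto_inverse_0_at_top[OF Kinf] by (simp add: inverse_eq_divide)
  have q0: "(q \<longlongrightarrow> 0) at_top"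
    using tendsto_mult[OF tendsto_const invK, of \<nu>] by (simp add: q_def)
  have Kr: "((\<lambda>p. K p * r p) \<longlongrightarrow> \<nu> * exp (- \<nu>)) at_top"
    unfolding K_def r_def q_def by (rule Kr_lim[OF Kinf[unfolded K_def] nu])
  have invK: "((\<lambda>p. 1 / K p) \<longlongrightarrow> 0) at_top"
    using tendsto_inverse_0_at_top[OF Kinf] by (simp add: inverse_eq_divide)
  have invL: "((\<lambda>p. 1 / L p) \<longlongrightarrow> 0) at_top"
    using tendsto_inverse_0_at_top[OF Linf] by (simp add: inverse_eq_divide)
  have Lpos: "\<forall>\<^sub>F p in at_top. L p > 0"
    using Linf by (rule filterlim_at_top_dense[THEN iffD1, rule_format])
  have r0: "(r \<longlongrightarrow> 0) at_top"
  proof -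
    have "((\<lambda>p. K p * r p * (1 / K p)) \<longlongrightarrow> \<nu> * exp (- \<nu>) * 0) at_top"
      by (rule tendsto_mult[OF Kr invK])
    moreover have "\<forall>\<^sub>F p in at_top. K p * r p * (1 / K p) = r p"
      using KQ by eventually_elim (use nu in auto)
    ultimately show ?thesis using Lim_transform_eventually by fastforce
  qed
  have nb: "\<forall>\<^sub>F p in at_top. \<gamma> * K p * L p \<le> real (n p) \<and> real (n p) \<le> \<gamma> * K p * L p + 1"
    using Lpos
  proof eventually_elim
    case (elim p)
    have "0 \<le> \<gamma> * K p * L p" using elim ga by (simp add: K_def)
    hence "real (n p) = of_int \<lceil>\<gamma> * K p * L p\<rceil>"
      by (simp add: nd K_def L_def)
    thus ?case by (simp add: le_of_int_ceiling of_int_ceiling_le_add_one)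
  qed
  have xL: "((\<lambda>p. x p / L p) \<longlongrightarrow> a) at_top"
  proof (rule tendsto_sandwich)
    show "\<forall>\<^sub>F p in at_top. \<gamma> * (K p * r p) \<le> x p / L p"
      using nb Lpos rpos
    proof eventually_elim
      case (elim p)
      have "\<gamma> * K p * L p * r p \<le> real (n p) * r p" using elim by (intro mult_right_mono) auto
      thus ?case using elim by (simp add: x_def field_simps)
    qed
    show "\<forall>\<^sub>F p in at_top. x p / L p \<le> \<gamma> * (K p * r p) + r p * (1 / L p)"
      using nb Lpos rpos
    proof eventually_elim
      case (elim p)
      have "real (n p) * r p \<le> (\<gamma> * K p * L p + 1) * r p" using elim by (intro mult_right_mono) auto
      thus ?case using elim by (simp add: x_def field_simps)
    qed
    show "((\<lambda>p. \<gamma> * (K p * r p)) \<longlongrightarrow> a) at_top"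
      using tendsto_mult[OF tendsto_const Kr, of \<gamma>] by (simp add: a_def mult_ac)
    show "((\<lambda>p. \<gamma> * (K p * r p) + r p * (1 / L p)) \<longlongrightarrow> a) at_top"
      using tendsto_add[OF tendsto_mult[OF tendsto_const Kr, of \<gamma>] tendsto_mult[OF r0 invL]]
      by (simp add: a_def mult_ac)
  qed
  have c0: "\<forall>\<^sub>F p in at_top. 0 \<le> c p \<and> real (m p) \<le> c p \<and> c p - 1 \<le> real (m p)"
    using Lpos
  proof eventually_elim
    case (elim p)
    have c0: "0 \<le> c p" unfolding cA A0_def using elim Ph0 nu ga by simp
    have "real (m p) = of_int \<lfloor>c p\<rfloor>" using c0 by (simp add: m_def)
    then show ?case using floor_correct[of "c p"] c0 by auto
  qed
  have PE: "\<forall>\<^sub>F p in at_top. 1 - exp (- (K p * \<beta> p)) \<le> P p \<and> P p \<le> 1"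
    using kp qpos c0
  proof eventually_elim
    case (elim p)
    have q01: "0 \<le> \<nu> / real (k p)" "\<nu> / real (k p) \<le> 1" using elim by (auto simp: q_def K_def)
    have mc: "real (m p) \<le> \<Phi> * \<nu> * exp (- \<nu>) * \<gamma> * ln (real p)" using elim by (simp add: c_def)
    have "1 - (1 - pmf (binomial_pmf (n p) (\<nu> / real (k p) * (1 - \<nu> / real (k p)) ^ (k p - 1))) (m p)) ^ k p \<le> P p"
      unfolding P_def by (rule pair_bound[OF _ q01 mc]) (use elim in auto)
    hence "1 - (1 - \<beta> p) ^ k p \<le> P p" by (simp add: \<beta>_def r_def q_def K_def)
    moreover have "(1 - \<beta> p) ^ k p \<le> exp (- (K p * \<beta> p))"
      unfolding K_def \<beta>_def by (intro pow_exp_bound) (auto simp: pmf_le_1)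
    ultimately show ?case by (simp add: P_def)
  qed
  have hgen: "\<forall>\<^sub>F p in at_top. exp (ln C1 + \<theta> * L p + g p) \<le> K p * \<beta> p"
    if "\<forall>\<^sub>F p in at_top. exp (g p) \<le> \<beta> p" for g
    using that K1 eventually_gt_at_top[of 0]
  proof eventually_elim
    case (elim p)
    have "exp (ln C1 + \<theta> * L p + g p) = C1 * real p powr \<theta> * exp (g p)"
      using C1(1) elim by (simp add: exp_add powr_def L_def)
    also have "\<dots> \<le> K p * \<beta> p"
      using elim C1(1) by (intro mult_mono) (auto simp: \<beta>_def K_def)
    finally show ?case .
  qed
  have hlim: "((\<lambda>p. (ln C1 + \<theta> * L p + g p) / L p) \<longlongrightarrow> \<theta> + l) at_top"
    if "((\<lambda>p. g p / L p) \<longlongrightarrow> l) at_top" for g l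
  proof -
    have "((\<lambda>p. ln C1 * (1 / L p) + \<theta> + g p / L p) \<longlongrightarrow> ln C1 * 0 + \<theta> + l) at_top"
      by (intro tendsto_add tendsto_mult tendsto_const invL that)
    moreover have "\<forall>\<^sub>F p in at_top. ln C1 * (1 / L p) + \<theta> + g p / L p = (ln C1 + \<theta> * L p + g p) / L p"
      using Lpos by eventually_elim (simp add: field_simps)
    ultimately show ?thesis using Lim_transform_eventually by fastforce
  qed
  obtain g l where gl: "\<forall>\<^sub>F p in at_top. exp (g p) \<le> \<beta> p" "((\<lambda>p. g p / L p) \<longlongrightarrow> l) at_top" "\<theta> + l > 0"
  proof (cases "\<Phi> = 0")
    case True
    define g where "g = (\<lambda>p. - x p / (1 - r p))"
    have m0: "m p = 0" for p by (simp add: m_def c_def True)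
    have 1: "\<forall>\<^sub>F p in at_top. exp (g p) \<le> \<beta> p"
      using rpos
    proof eventually_elim
      case (elim p)
      have "exp (- real (n p) * r p / (1 - r p)) \<le> (1 - r p) ^ n p"
        using elim by (intro one_minus_pow_ge) auto
      thus ?case using elim by (simp add: g_def x_def \<beta>_def m0)
    qed
    have 2: "((\<lambda>p. g p / L p) \<longlongrightarrow> - a / (1 - 0)) at_top"
    proof -
      have "((\<lambda>p. - (x p / L p) / (1 - r p)) \<longlongrightarrow> - a / (1 - 0)) at_top"
        by (intro tendsto_divide tendsto_minus tendsto_diff tendsto_const xL r0) simp
      moreover have "\<forall>\<^sub>F p in at_top. - (x p / L p) / (1 - r p) = g p / L p"
        using Lpos rpos by eventually_elim (simp add: g_def field_simps)
      ultimately show ?thesis using Lim_transform_eventually by fastforce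
    qed
    have 3: "\<theta> + - a / (1 - 0) > 0"
      using key by (simp add: True Dfun_def a_def)
    show ?thesis by (rule that[OF 1 2 3])
  next
    case False
    hence Phpos: "\<Phi> > 0" using Ph0 by simp
    have A0pos: "A0 > 0" using Phpos a0 by (simp add: A0a)
    have A0a': "A0 < a" using Ph1 a0 by (simp add: A0a)
    have cge: "\<forall>\<^sub>F p in at_top. c p \<ge> 2"
    proof -
      have "filterlim (\<lambda>p. A0 * L p) at_top at_top"
        by (rule filterlim_tendsto_pos_mult_at_top[OF tendsto_const A0pos Linf])
      hence "\<forall>\<^sub>F p in at_top. 2 \<le> A0 * L p" by (simp add: filterlim_at_top)
      thus ?thesis by (simp add: cA)
    qed
    define x' where "x' = (\<lambda>p. (real (n p) - real (m p)) * r p)"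
    have mrL: "((\<lambda>p. real (m p) * r p / L p) \<longlongrightarrow> 0) at_top"
    proof (rule tendsto_sandwich)
      show "\<forall>\<^sub>F p in at_top. (\<lambda>_. 0) p \<le> real (m p) * r p / L p"
        using Lpos rpos by eventually_elim auto
      show "\<forall>\<^sub>F p in at_top. real (m p) * r p / L p \<le> A0 * r p"
        using Lpos rpos c0
      proof eventually_elim
        case (elim p)
        have "real (m p) * r p \<le> c p * r p" using elim by (intro mult_right_mono) auto
        thus ?case using elim by (simp add: cA field_simps)
      qed
      show "((\<lambda>_. 0) \<longlongrightarrow> (0::real)) at_top" by simp
      show "((\<lambda>p. A0 * r p) \<longlongrightarrow> 0) at_top" using tendsto_mult[OF tendsto_const r0, of A0] by simp
    qed
    have x'L: "((\<lambda>p. x' p / L p) \<longlongrightarrow> a) at_top"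
    proof -
      have "((\<lambda>p. x p / L p - real (m p) * r p / L p) \<longlongrightarrow> a - 0) at_top"
        by (intro tendsto_diff xL mrL)
      moreover have "\<forall>\<^sub>F p in at_top. x p / L p - real (m p) * r p / L p = x' p / L p"
        using Lpos by eventually_elim (simp add: x_def x'_def field_simps)
      ultimately show ?thesis using Lim_transform_eventually by fastforce
    qed
    have x'c: "\<forall>\<^sub>F p in at_top. c p \<le> x' p"
    proof -
      have "\<forall>\<^sub>F p in at_top. A0 < x' p / L p" by (rule order_tendstoD(1)[OF x'L A0a'])
      thus ?thesis using Lpos by eventually_elim (simp add: cA field_simps)
    qed
    define g where "g = (\<lambda>p. (c p - 1) * (ln (x' p / c p) + 1) - ln (c p) - 1 - real (n p) * r p / (1 - r p))"
    have 1: "\<forall>\<^sub>F p in at_top. exp (g p) \<le> \<beta> p"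
      using c0 cge x'c rpos
    proof eventually_elim
      case (elim p)
      have "1 \<le> m p" using elim by linarith
      thus ?case unfolding g_def \<beta>_def x'_def
        using elim by (intro binom_lower) (auto simp: x'_def)
    qed
    define l where "l = (A0 - 0) * (ln (a / A0) + 1) - (ln A0 * 0 + 0) - 0 - a / (1 - 0)"
    have 2: "((\<lambda>p. g p / L p) \<longlongrightarrow> l) at_top"
    proof -
      have lnL: "((\<lambda>p. ln (L p) / L p) \<longlongrightarrow> 0) at_top" unfolding L_def by real_asymp
      have "((\<lambda>p. (A0 - 1 / L p) * (ln ((x' p / L p) / A0) + 1) - (ln A0 * (1 / L p) + ln (L p) / L p)
              - 1 / L p - (x p / L p) / (1 - r p)) \<longlongrightarrow> l) at_top"
        unfolding l_def
        by (intro tendsto_diff tendsto_add tendsto_mult tendsto_const tendsto_ln tendsto_divide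
             invL lnL x'L xL r0) (use A0pos a0 in auto)
      moreover have "\<forall>\<^sub>F p in at_top. (A0 - 1 / L p) * (ln ((x' p / L p) / A0) + 1) - (ln A0 * (1 / L p) + ln (L p) / L p)
              - 1 / L p - (x p / L p) / (1 - r p) = g p / L p"
        using Lpos rpos x'c cge
      proof eventually_elim
        case (elim p)
        have cp: "c p > 0" using elim by simp
        have e1: "(x' p / L p) / A0 = x' p / c p" using elim by (simp add: cA field_simps)
        have e2: "ln (c p) = ln A0 + ln (L p)" using elim A0pos by (simp add: cA ln_mult)
        have e3: "A0 - 1 / L p = (c p - 1) / L p" using elim by (simp add: cA field_simps)
        show ?case unfolding e1 e3 g_def e2 using elim by (simp add: x_def field_simps)
      qed
      ultimately show ?thesis using Lim_transform_eventually by fastforce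
    qed
    have 3: "\<theta> + l > 0"
    proof -
      have "ln (a / A0) = - ln \<Phi>" using Phpos a0 by (simp add: A0a ln_div)
      hence "l = - (Dfun 1 \<Phi> * a)" unfolding l_def Dfun_def by (simp add: A0a algebra_simps)
      moreover have "Dfun 1 \<Phi> * a = Dfun 1 \<Phi> * \<nu> * exp (- \<nu>) * \<gamma>" by (simp add: a_def mult_ac)
      ultimately show ?thesis using key by simp
    qed
    show ?thesis by (rule that[OF 1 2 3])
  qed
  have 3: "((\<lambda>p. (ln C1 + \<theta> * L p + g p) / ln (real p)) \<longlongrightarrow> \<theta> + l) at_top"
    using hlim[OF gl(2)] unfolding L_def .
  have "(P \<longlongrightarrow> 1) sequentially"
    by (rule final_step[OF PE hgen[OF gl(1)] 3 gl(3)])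
  thus ?thesis by (simp add: P_def)
qed

end
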